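(* Let $a,b$ be integers with $0<b<a$, let $S=\langle a,a+1,\ldots,a+b\rangle$ with conductor $c$ and genus $g$, and let $m\ge 2c-1$. Let $m=m_1<m_2<\cdots<m_t$ be integers such that $\{m_1,\ldots,m_t\}$ is amenable, and assume that $\{m_1,\ldots,m_t\}\cap[m,m+a+b)=\{m,m+1,\ldots,m+l-1\}$ for some positive integer $l$. Then $$\sharp\mathrm D(m_1,\ldots,m_t)=m-2g+t+\sum_{j=1}^{l-1}\left\lceil\frac{a-j}{b}\right\rceil.$$
   Context: The genus of a numerical semigroup $S$ is $g=\sharp(\mathbb N\setminus S)$ and its conductor $c$ is the least element of $S$ with $c+n\in S$ for all $n\in\mathbb N$. For $x\in S$, $\mathrm D(x)=\{\alpha\in S\mid x-\alpha\in S\}$, and $\mathrm D(x_1,\ldots,x_t)=\mathrm D(x_1)\cup\cdots\cup\mathrm D(x_t)$. A set $M=\{m_1<\cdots<m_t\}\subseteq S$ with $2c-1\le m=m_1$ is amenable if $\mathrm D(m_i)\cap[m,\infty)\subseteq M$ for all $i$. *)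

theory Defs
  imports Complex_Main
begin

inductive_set gen_semigroup :: "nat set \<Rightarrow> nat set" for A :: "nat set" where
  zero: "0 \<in> gen_semigroup A"
| add: "x \<in> A \<Longrightarrow> y \<in> gen_semigroup A \<Longrightarrow> x + y \<in> gen_semigroup A"

definition conductor :: "nat set \<Rightarrow> nat" where
  "conductor S = (LEAST c. c \<in> S \<and> (\<forall>n. c + n \<in> S))"

definition genus :: "nat set \<Rightarrow> nat" where
  "genus S = card (UNIV - S)"

definition Dset :: "nat set \<Rightarrow> nat \<Rightarrow> nat set" where
  "Dset S x = {\<alpha> \<in> S. \<alpha> \<le> x \<and> x - \<alpha> \<in> S}"

definition Dunion :: "nat set \<Rightarrow> nat set \<Rightarrow> nat set" where
  "Dunion S M = (\<Union>x\<in>M. Dset S x)"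

definition amenable :: "nat set \<Rightarrow> nat set \<Rightarrow> bool" where
  "amenable S M \<longleftrightarrow> finite M \<and> M \<noteq> {} \<and> M \<subseteq> S \<and>
     2 * conductor S - 1 \<le> Min M \<and> (\<forall>x\<in>M. Dset S x \<inter> {Min M..} \<subseteq> M)"

end

theory Submission
  imports Defs
begin

lemma decomp:
  fixes a b k x :: nat
  assumes "Suc k * a \<le> x" "x \<le> Suc k * (a+b)"
  shows "\<exists>s. a \<le> s \<and> s \<le> a+b \<and> s \<le> x \<and> k*a \<le> x - s \<and> x - s \<le> k*(a+b)"
proof -
  have e1: "Suc k * a = k*a + a" by simp
  have e2: "k*(a+b) = k*a+k*b" by (simp add: algebra_simps)
  have e3: "Suc k*(a+b) = k*a+k*b+a+b" by (simp add: algebra_simps)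
  show ?thesis
  proof (cases "x - k*(a+b) \<le> a")
    case True
    then show ?thesis using assms e1 e2 e3 by (intro exI[of _ a]) auto
  next
    case False
    then show ?thesis using assms e1 e2 e3 by (intro exI[of _ "x - k*(a+b)"]) auto
  qed
qed

lemma S_to:
  "x \<in> gen_semigroup {a..a+b} \<Longrightarrow> \<exists>k. k*a \<le> x \<and> x \<le> k*(a+(b::nat))"
proof (induction rule: gen_semigroup.induct)
  case zero
  then show ?case by (intro exI[of _ 0]) auto
next
  case (add x y)
  then obtain k where "k*a \<le> y" "y \<le> k*(a+b)" by blast
  then show ?case using add.hyps(1)
    by (intro exI[of _ "Suc k"]) (auto simp: algebra_simps)
qed

lemma S_from:
  "k*a \<le> x \<Longrightarrow> x \<le> k*(a+b) \<Longrightarrow> x \<in> gen_semigroup {a..a+(b::nat)}"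
proof (induction k arbitrary: x)
  case 0
  then show ?case using gen_semigroup.zero by auto
next
  case (Suc k)
  obtain s where s: "a \<le> s" "s \<le> a+b" "s \<le> x" "k*a \<le> x - s" "x - s \<le> k*(a+b)"
    using decomp[OF Suc.prems] by blast
  have "x - s \<in> gen_semigroup {a..a+b}" using Suc.IH s by blast
  then have "s + (x - s) \<in> gen_semigroup {a..a+b}" using s by (intro gen_semigroup.add) auto
  then show ?case using s by simp
qed

lemma S_char: "x \<in> gen_semigroup {a..a+b} \<longleftrightarrow> (\<exists>k. k*a \<le> x \<and> x \<le> k*(a+(b::nat)))"
  using S_to S_from by blast

lemma not_S:
  fixes a b i x :: nat
  assumes "i*(a+b) < x" "x < Suc i * a"
  shows "x \<notin> gen_semigroup {a..a+b}"
proof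
  assume "x \<in> gen_semigroup {a..a+b}"
  then obtain k where k: "k*a \<le> x" "x \<le> k*(a+b)" using S_to by blast
  show False
  proof (cases "k \<le> i")
    case True
    then have "k*(a+b) \<le> i*(a+b)" by (rule mult_le_mono1)
    then show False using k assms by linarith
  next
    case False
    then have "Suc i * a \<le> k*a" by (intro mult_le_mono1) auto
    then show False using k assms by linarith
  qed
qed


lemma big_in_S:
  fixes a b n :: nat
  assumes "0 < b" "a \<le> n div a" and apos: "0 < a"
  shows "n \<in> gen_semigroup {a..a+b}"
proof -
  define k where "k = n div a"
  have n: "n = k*a + n mod a" unfolding k_def by simp
  have "n mod a < a" using apos by simp
  have "k \<le> k*b" using assms by simp
  moreover have "a \<le> k" using assms k_def by simp
  ultimately have "n \<le> k*a + k*b" using n \<open>n mod a < a\<close> by linarith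
  then have "n \<le> k*(a+b)" by (simp add: algebra_simps)
  moreover have "k*a \<le> n" using n by linarith
  ultimately show ?thesis using S_from by blast
qed

lemma cond_props:
  fixes a b :: nat
  assumes "0 < b" "b < a"
  defines "S \<equiv> gen_semigroup {a..a+b}"
  shows "conductor S \<in> S" "\<And>n. conductor S \<le> n \<Longrightarrow> n \<in> S" "1 \<le> conductor S"
proof -
  let ?P = "\<lambda>c. c \<in> S \<and> (\<forall>n. c + n \<in> S)"
  have "?P (a*a)"
  proof -
    have "\<And>n. a \<le> (a*a+n) div a"
    proof -
      fix n
      have "a*a div a \<le> (a*a+n) div a" by (rule div_le_mono) simp
      then show "a \<le> (a*a+n) div a" using assms by simp
    qed
    then have "\<And>n. a*a+n \<in> S" unfolding S_def using big_in_S[OF assms(1)] assms by simp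
    then show ?thesis by (metis add_0_right)
  qed
  then have P: "?P (conductor S)" unfolding conductor_def by (rule LeastI)
  then show "conductor S \<in> S" by blast
  show "\<And>n. conductor S \<le> n \<Longrightarrow> n \<in> S" using P by (metis le_add_diff_inverse)
  have "1 \<notin> S"
  proof
    assume "1 \<in> S"
    then obtain k where "k*a \<le> 1" "1 \<le> k*(a+b)" unfolding S_def using S_to by blast
    then show False using assms
      by (cases k) auto
  qed
  then show "1 \<le> conductor S" using P
    by (metis One_nat_def add_0 less_one not_le)
qed


lemma K_eq:
  fixes a b j :: nat
  assumes "0 < b" "b < a" "1 \<le> j"
  defines "S \<equiv> gen_semigroup {a..a+b}"
  shows "{h. h \<notin> S \<and> h+j \<in> S \<and> (\<forall>y\<in>{1..<j}. h+y \<notin> S)} = (\<lambda>i. Suc i * a - j) ` {i. i*b + j < a}"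
proof (rule set_eqI, rule iffI)
  fix h assume "h \<in> {h. h \<notin> S \<and> h+j \<in> S \<and> (\<forall>y\<in>{1..<j}. h+y \<notin> S)}"
  then have h: "h \<notin> S" "h+j \<in> S" "\<And>y. 1 \<le> y \<Longrightarrow> y < j \<Longrightarrow> h+y \<notin> S" by auto
  obtain k where k: "k*a \<le> h+j" "h+j \<le> k*(a+b)" using h(2) S_to unfolding S_def by blast
  have "k \<noteq> 0"
  proof
    assume "k = 0" then show False using k assms(3) by simp
  qed
  then obtain i where i: "k = Suc i" by (cases k) auto
  have eq: "h + j = Suc i * a"
  proof (rule ccontr)
    assume "h + j \<noteq> Suc i * a"
    then have "k*a \<le> h + (j-1)" "h + (j-1) \<le> k*(a+b)" using k i by auto
    then have "h + (j-1) \<in> S" unfolding S_def using S_from by blast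
    then show False
    proof (cases "j = 1")
      case True
      then show False using h(1) \<open>h + (j-1) \<in> S\<close> by simp
    next
      case False
      then show False using h(3)[of "j-1"] \<open>h + (j-1) \<in> S\<close> assms(3) by simp
    qed
  qed
  have "i*b + j < a"
  proof (rule ccontr)
    assume "\<not> i*b + j < a"
    then have le: "h \<le> i*a + i*b" using eq by (simp add: algebra_simps)
    show False
    proof (cases "i*a \<le> h")
      case True
      then have "h \<in> S" unfolding S_def using S_from[of i a h b] le by (simp add: algebra_simps)
      then show False using h by blast
    next
      case False
      then have "h + (i*a - h) \<in> S" unfolding S_def using S_from[of i a "i*a" b] by (simp add: algebra_simps)
      moreover have "1 \<le> i*a - h" "i*a - h < j" using False eq assms(1,2) by auto
      ultimately show False using h(3) by blast
    qed
  qed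
  moreover have "h = Suc i * a - j" using eq by simp
  ultimately show "h \<in> (\<lambda>i. Suc i * a - j) ` {i. i*b + j < a}" by blast
next
  fix h assume "h \<in> (\<lambda>i. Suc i * a - j) ` {i. i*b + j < a}"
  then obtain i where i: "i*b + j < a" "h = Suc i * a - j" by blast
  have hj: "h + j = Suc i * a" using i by (simp add: algebra_simps)
  have "h + j \<in> S" unfolding S_def using S_from[of "Suc i" a "h+j" b] hj by (simp add: algebra_simps)
  moreover have "\<And>y. y < j \<Longrightarrow> h + y \<notin> S"
  proof -
    fix y assume "y < j"
    have "i*(a+b) < h + y" using i by (simp add: algebra_simps)
    moreover have "h + y < Suc i * a" using hj \<open>y < j\<close> by linarith
    ultimately show "h + y \<notin> S" unfolding S_def by (rule not_S)
  qed
  ultimately show "h \<in> {h. h \<notin> S \<and> h+j \<in> S \<and> (\<forall>y\<in>{1..<j}. h+y \<notin> S)}"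
  proof -
    have "h \<notin> S" using \<open>\<And>y. y < j \<Longrightarrow> h + y \<notin> S\<close>[of 0] assms(3) by simp
    then show ?thesis using \<open>h + j \<in> S\<close> \<open>\<And>y. y < j \<Longrightarrow> h + y \<notin> S\<close> by auto
  qed
qed


lemma ceil_eq:
  fixes a b j :: nat
  assumes "0 < b" "j < a + b"
  shows "\<lceil>real_of_int (int a - int j) / real b\<rceil> = (if j < a then int ((a-j-1) div b) + 1 else 0)"
proof (cases "j < a")
  case True
  define q where "q = (a-j-1) div b"
  have q1: "q*b \<le> a-j-1" unfolding q_def by (metis div_mult_mod_eq le_add1)
  have q2: "a-j-1 < (q+1)*b" unfolding q_def using assms(1)
    by (metis add.commute div_mult_mod_eq mod_less_divisor mult.commute mult_Suc_right plus_1_eq_Suc add_less_cancel_left)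
  have n1: "q*b + j + 1 \<le> a" using q1 True by linarith
  have n2: "a \<le> q*b + b + j" using q2 True by (simp add: algebra_simps)
  have r1: "real q * real b < real a - real j"
  proof -
    have "real (q*b + j + 1) \<le> real a" using n1 by (simp only: of_nat_le_iff)
    then show ?thesis by simp
  qed
  have r2: "real a - real j \<le> (real q + 1) * real b"
  proof -
    have "real a \<le> real (q*b + b + j)" using n2 by (simp only: of_nat_le_iff)
    then show ?thesis by (simp add: algebra_simps)
  qed
  have bpos: "0 < real b" using assms by simp
  have "\<lceil>(real a - real j) / real b\<rceil> = int q + 1"
  proof (rule ceiling_unique)
    show "of_int (int q + 1) - 1 < (real a - real j) / real b"
      using r1 bpos by (simp add: pos_less_divide_eq)
    show "(real a - real j) / real b \<le> of_int (int q + 1)"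
      using r2 bpos by (simp add: pos_divide_le_eq)
  qed
  then show ?thesis using True unfolding q_def by simp
next
  case False
  have bpos: "0 < real b" using assms by simp
  have "\<lceil>(real a - real j) / real b\<rceil> = 0"
  proof (rule ceiling_unique)
    show "of_int 0 - 1 < (real a - real j) / real b"
      using assms bpos by (simp add: pos_less_divide_eq)
    show "(real a - real j) / real b \<le> of_int 0"
      using False bpos by (simp add: divide_le_0_iff)
  qed
  then show ?thesis using False by simp
qed

lemma card_K:
  fixes a b j :: nat
  assumes "0 < b" "b < a" "1 \<le> j" "j < a + b"
  defines "S \<equiv> gen_semigroup {a..a+b}"
  shows "int (card {h. h \<notin> S \<and> h+j \<in> S \<and> (\<forall>y\<in>{1..<j}. h+y \<notin> S)}) = \<lceil>real_of_int (int a - int j) / real b\<rceil>"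
proof -
  have inj: "inj_on (\<lambda>i. Suc i * a - j) {i. i*b + j < a}"
  proof (rule inj_onI)
    fix x y assume "x \<in> {i. i*b + j < a}" "y \<in> {i. i*b + j < a}" "Suc x * a - j = Suc y * a - j"
    moreover have "j < Suc x * a" "j < Suc y * a" using \<open>x \<in> _\<close> \<open>y \<in> _\<close> by auto
    ultimately have "Suc x * a = Suc y * a" by linarith
    then show "x = y" using assms by simp
  qed
  have "card {h. h \<notin> S \<and> h+j \<in> S \<and> (\<forall>y\<in>{1..<j}. h+y \<notin> S)} = card {i. i*b + j < a}"
    unfolding S_def K_eq[OF assms(1-3)] using card_image[OF inj] by simp
  also have "\<dots> = (if j < a then (a-j-1) div b + 1 else 0)"
  proof (cases "j < a")
    case True
    have "{i. i*b + j < a} = {..(a-j-1) div b}"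
    proof (rule set_eqI)
      fix i
      have "i*b + j < a \<longleftrightarrow> i*b \<le> a-j-1" using True by auto
      also have "\<dots> \<longleftrightarrow> i \<le> (a-j-1) div b" using assms(1) by (simp add: less_eq_div_iff_mult_less_eq)
      finally show "i \<in> {i. i*b + j < a} \<longleftrightarrow> i \<in> {..(a-j-1) div b}" by simp
    qed
    then show ?thesis using True by simp
  next
    case False
    then show ?thesis by simp
  qed
  finally show ?thesis using ceil_eq[OF assms(1,4)] by simp
qed


lemma card_Hs:
  fixes S :: "nat set"
  assumes fin: "finite (UNIV - S)"
  shows "card {h. h \<notin> S \<and> (\<exists>y\<in>{1..<l}. h+y \<in> S)} =
         (\<Sum>j<l. card {h. h \<notin> S \<and> h+j \<in> S \<and> (\<forall>y\<in>{1..<j}. h+y \<notin> S)})"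
proof (induction l)
  case 0
  then show ?case by simp
next
  case (Suc l)
  let ?H = "\<lambda>l. {h. h \<notin> S \<and> (\<exists>y\<in>{1..<l}. h+y \<in> S)}"
  let ?K = "{h. h \<notin> S \<and> h+l \<in> S \<and> (\<forall>y\<in>{1..<l}. h+y \<notin> S)}"
  have eq: "?H (Suc l) = ?H l \<union> ?K"
  proof (rule set_eqI)
    fix h
    show "h \<in> ?H (Suc l) \<longleftrightarrow> h \<in> ?H l \<union> ?K"
    proof
      assume "h \<in> ?H (Suc l)"
      then obtain y where y: "h \<notin> S" "1 \<le> y" "y < Suc l" "h + y \<in> S" by auto
      show "h \<in> ?H l \<union> ?K"
      proof (cases "y < l")
        case True then show ?thesis using y by auto
      next
        case False then have "y = l" using y by simp
        then show ?thesis using y by auto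
      qed
    next
      assume "h \<in> ?H l \<union> ?K"
      then show "h \<in> ?H (Suc l)"
      proof
        assume "h \<in> ?H l" then show ?thesis by auto
      next
        assume h: "h \<in> ?K"
        then have "l \<noteq> 0" by (cases l) auto
        then show ?thesis using h by auto
      qed
    qed
  qed
  have f1: "finite (?H l)" by (rule finite_subset[OF _ fin]) auto
  have f2: "finite ?K" by (rule finite_subset[OF _ fin]) auto
  have "?H l \<inter> ?K = {}" by auto
  then have "card (?H (Suc l)) = card (?H l) + card ?K" unfolding eq
    using card_Un_disjoint[OF f1 f2] by simp
  then show ?case using Suc.IH by simp
qed

lemma card_Dset:
  fixes S :: "nat set" and c m :: nat
  assumes c1: "1 \<le> c" and big: "\<And>n. c \<le> n \<Longrightarrow> n \<in> S" and m: "2*c - 1 \<le> m"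
  shows "card (Dset S m) + 2 * card (UNIV - S) = m + 1"
proof -
  let ?G = "UNIV - S"
  have Gc: "?G \<subseteq> {..<c}" using big by (auto simp: not_less[symmetric])
  then have finG: "finite ?G" by (rule finite_subset) simp
  have Gm: "\<And>h. h \<in> ?G \<Longrightarrow> h \<le> m" using Gc m c1 by auto
  let ?I = "(\<lambda>h. m - h) ` ?G"
  have inj: "inj_on (\<lambda>h. m - h) ?G"
  proof (rule inj_onI)
    fix x y assume "x \<in> ?G" "y \<in> ?G" "m - x = m - y"
    moreover then have "x \<le> m" "y \<le> m" using Gm by auto
    ultimately show "x = y" by linarith
  qed
  have cI: "card ?I = card ?G" using card_image[OF inj] .
  have cover: "{..m} = Dset S m \<union> ?G \<union> ?I"
  proof (rule set_eqI)
    fix x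
    show "x \<in> {..m} \<longleftrightarrow> x \<in> Dset S m \<union> ?G \<union> ?I"
    proof
      assume x: "x \<in> {..m}"
      show "x \<in> Dset S m \<union> ?G \<union> ?I"
      proof (cases "x \<in> S \<and> m - x \<in> S")
        case True then show ?thesis using x unfolding Dset_def by auto
      next
        case False
        show ?thesis
        proof (cases "x \<in> S")
          case False then show ?thesis by auto
        next
          case True
          then have "m - x \<in> ?G" using \<open>\<not> (x \<in> S \<and> m - x \<in> S)\<close> by auto
          moreover have "x = m - (m - x)" using x by simp
          ultimately show ?thesis by blast
        qed
      qed
    next
      assume "x \<in> Dset S m \<union> ?G \<union> ?I"
      then show "x \<in> {..m}" unfolding Dset_def using Gm by auto
    qed
  qed
  have d1: "Dset S m \<inter> ?G = {}" unfolding Dset_def by auto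
  have d2: "Dset S m \<inter> ?I = {}" unfolding Dset_def using Gm by auto
  have d3: "?G \<inter> ?I = {}"
  proof (rule ccontr)
    assume "?G \<inter> ?I \<noteq> {}"
    then obtain h h' where "h \<in> ?G" "h' \<in> ?G" "h = m - h'" by blast
    moreover then have "h < c" "h' < c" "h' \<le> m" using Gc Gm by auto
    ultimately show False using m by linarith
  qed
  have finD: "finite (Dset S m)" unfolding Dset_def by auto
  have "card {..m} = card (Dset S m) + card ?G + card ?I"
    unfolding cover using finD finG d1 d2 d3
    by (simp add: card_Un_disjoint Int_Un_distrib2)
  then show ?thesis using cI by simp
qed


theorem corollary4p8:
  fixes a b m l :: nat and M :: "nat set"
  defines "S \<equiv> gen_semigroup {a..a+b}"
  assumes "0 < b" and "b < a"
    and "2 * conductor S - 1 \<le> m"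
    and "amenable S M" and "Min M = m"
    and "0 < l"
    and "M \<inter> {m..<m+a+b} = {m..<m+l}"
  shows "int (card (Dunion S M)) =
           int m - 2 * int (genus S) + int (card M)
           + (\<Sum>j=1..l-1. \<lceil>real_of_int (int a - int j) / real b\<rceil>)"
proof -
  note ab = assms(2,3)
  define c where "c = conductor S"
  have c1: "1 \<le> c" and big: "\<And>n. c \<le> n \<Longrightarrow> n \<in> S"
    using cond_props[OF ab] unfolding S_def c_def by auto
  have mc: "2*c - 1 \<le> m" using assms(4) c_def by simp
  then have cm: "c \<le> m" using c1 by linarith
  have gapc: "\<And>h. h \<notin> S \<Longrightarrow> h < c" using big not_less by blast
  have finG: "finite (UNIV - S)" by (rule finite_subset[of _ "{..<c}"]) (use gapc in auto)
  have finM: "finite M" and neM: "M \<noteq> {}" and MS: "M \<subseteq> S"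
    and clos0: "\<And>x. x \<in> M \<Longrightarrow> Dset S x \<inter> {Min M..} \<subseteq> M"
    using assms(5) unfolding amenable_def by auto
  have mM: "m \<in> M" using Min_in[OF finM neM] assms(6) by simp
  have mle: "\<And>x. x \<in> M \<Longrightarrow> m \<le> x" using Min_le[OF finM] assms(6) by blast
  have clos: "\<And>x \<alpha>. x \<in> M \<Longrightarrow> \<alpha> \<le> x \<Longrightarrow> x - \<alpha> \<in> S \<Longrightarrow> m \<le> \<alpha> \<Longrightarrow> \<alpha> \<in> M"
  proof -
    fix x \<alpha> assume h: "x \<in> M" "\<alpha> \<le> x" "x - \<alpha> \<in> S" "m \<le> \<alpha>"
    then have "\<alpha> \<in> S" using big cm by auto
    then have "\<alpha> \<in> Dset S x \<inter> {Min M..}" using h assms(6) unfolding Dset_def by auto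
    then show "\<alpha> \<in> M" using clos0[OF h(1)] by blast
  qed
  have lab: "l \<le> a + b"
  proof (rule ccontr)
    assume "\<not> l \<le> a + b"
    then have "m + (a+b) \<in> {m..<m+l}" by auto
    then show False using assms(8) by auto
  qed
  have inM: "\<And>y. y < l \<Longrightarrow> m + y \<in> M" using assms(8) by auto
  have smallM: "\<And>y. y < a + b \<Longrightarrow> m + y \<in> M \<Longrightarrow> y < l"
  proof -
    fix y assume "y < a + b" "m + y \<in> M"
    then have "m + y \<in> M \<inter> {m..<m+a+b}" by auto
    then have "m + y \<in> {m..<m+l}" using assms(8) by simp
    then show "y < l" by simp
  qed
  have key: "\<And>y. h \<notin> S \<Longrightarrow> m + y \<in> M \<Longrightarrow> h + y \<in> S \<Longrightarrow> (\<exists>y'\<in>{1..<l}. h + y' \<in> S)" for h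
  proof -
    fix y show "h \<notin> S \<Longrightarrow> m + y \<in> M \<Longrightarrow> h + y \<in> S \<Longrightarrow> (\<exists>y'\<in>{1..<l}. h + y' \<in> S)"
    proof (induction y rule: less_induct)
      case (less y)
      show ?case
      proof (cases "y < a + b")
        case True
        then have "y < l" using smallM less.prems by blast
        moreover have "y \<noteq> 0"
        proof
          assume "y = 0" then show False using less.prems(1,3) by simp
        qed
        ultimately show ?thesis using less.prems by auto
      next
        case False
        obtain k where k: "k*a \<le> h+y" "h+y \<le> k*(a+b)" using less.prems(3) S_to unfolding S_def by blast
        have "k \<noteq> 0"
        proof
          assume "k = 0" then show False using k False ab by simp
        qed
        then obtain k' where k': "k = Suc k'" by (cases k) auto
        obtain s where s: "a \<le> s" "s \<le> a+b" "s \<le> h+y" "k'*a \<le> h+y - s" "h+y - s \<le> k'*(a+b)"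
          using decomp[of k' a "h+y" b] k k' by blast
        have sy: "s \<le> y" using s False by linarith
        have sS: "s \<in> S" unfolding S_def using S_from[of 1 a s b] s by simp
        have "m + (y - s) \<in> M"
          using clos[OF less.prems(2), of "m + (y-s)"] sy sS by simp
        moreover have "h + (y - s) \<in> S" unfolding S_def using S_from s sy by (metis add_diff_assoc)
        moreover have "y - s < y" using s sy ab by linarith
        ultimately show ?thesis using less.IH less.prems(1) by blast
      qed
    qed
  qed
  define H where "H = {h. h \<notin> S \<and> (\<exists>y\<in>{1..<l}. h+y \<in> S)}"
  have Hm: "\<And>h. h \<in> H \<Longrightarrow> h < c" unfolding H_def using gapc by auto
  have DU: "Dunion S M = Dset S m \<union> (\<lambda>h. m - h) ` H \<union> (M - {m})"
  proof (rule set_eqI, rule iffI)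
    fix \<alpha> assume "\<alpha> \<in> Dunion S M"
    then obtain x where x: "x \<in> M" "\<alpha> \<in> S" "\<alpha> \<le> x" "x - \<alpha> \<in> S"
      unfolding Dunion_def Dset_def by auto
    show "\<alpha> \<in> Dset S m \<union> (\<lambda>h. m - h) ` H \<union> (M - {m})"
    proof (cases "m < \<alpha>")
      case True
      then have "\<alpha> \<in> M" using clos[OF x(1) x(3) x(4)] by simp
      then show ?thesis using True by auto
    next
      case False
      show ?thesis
      proof (cases "m - \<alpha> \<in> S")
        case True then show ?thesis using False x unfolding Dset_def by auto
      next
        case nS: False
        have xm: "m \<le> x" using mle x(1) by blast
        have "m + (x - m) \<in> M" using x(1) xm by simp
        moreover have "(m - \<alpha>) + (x - m) \<in> S" using x(4) xm False by (simp add: not_less)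
        ultimately have "m - \<alpha> \<in> H" unfolding H_def using key[OF nS] nS by blast
        moreover have "\<alpha> = m - (m - \<alpha>)" using False by simp
        ultimately show ?thesis by blast
      qed
    qed
  next
    fix \<alpha> assume "\<alpha> \<in> Dset S m \<union> (\<lambda>h. m - h) ` H \<union> (M - {m})"
    then consider "\<alpha> \<in> Dset S m" | "\<alpha> \<in> (\<lambda>h. m - h) ` H" | "\<alpha> \<in> M" by blast
    then show "\<alpha> \<in> Dunion S M"
    proof cases
      case 1 then show ?thesis using mM unfolding Dunion_def by blast
    next
      case 2
      then obtain h y where h: "\<alpha> = m - h" "h \<notin> S" "1 \<le> y" "y < l" "h + y \<in> S"
        unfolding H_def by auto
      have hc: "h < c" using gapc h(2) .
      have "c \<le> \<alpha>" using h(1) hc mc by linarith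
      then have "\<alpha> \<in> S" using big by blast
      moreover have "(m + y) - \<alpha> = h + y" using h(1) hc cm by simp
      ultimately have "\<alpha> \<in> Dset S (m + y)" using h unfolding Dset_def by auto
      then show ?thesis using inM[OF h(4)] unfolding Dunion_def by blast
    next
      case 3
      then have "\<alpha> \<in> S" using MS by blast
      then have "\<alpha> \<in> Dset S \<alpha>" unfolding Dset_def S_def using gen_semigroup.zero by auto
      then show ?thesis using 3 unfolding Dunion_def by blast
    qed
  qed
  have finH: "finite H" unfolding H_def by (rule finite_subset[OF _ finG]) auto
  have inj: "inj_on (\<lambda>h. m - h) H"
  proof (rule inj_onI)
    fix x y assume "x \<in> H" "y \<in> H" "m - x = m - y"
    moreover then have "x \<le> m" "y \<le> m" using Hm cm by (auto dest!: Hm)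
    ultimately show "x = y" by linarith
  qed
  have finD: "finite (Dset S m)" unfolding Dset_def by auto
  have d1: "Dset S m \<inter> (\<lambda>h. m - h) ` H = {}"
  proof -
    { fix h assume "h \<in> H" "m - h \<in> Dset S m"
      then have "h < c" "h \<notin> S" "m - (m - h) \<in> S" using Hm unfolding H_def Dset_def by auto
      then have False using cm by simp }
    then show ?thesis by blast
  qed
  have d2: "(Dset S m \<union> (\<lambda>h. m - h) ` H) \<inter> (M - {m}) = {}"
  proof -
    have "Dset S m \<union> (\<lambda>h. m - h) ` H \<subseteq> {..m}" unfolding Dset_def by auto
    moreover have "M - {m} \<subseteq> {m<..}" using mle by force
    ultimately show ?thesis by (auto simp: subset_iff) (metis atMost_iff greaterThan_iff not_le)+
  qed
  have cD: "card (Dunion S M) = card (Dset S m) + card H + (card M - 1)"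
    unfolding DU using card_Un_disjoint[OF _ _ d2] card_Un_disjoint[OF finD _ d1] finD finH finM
      card_image[OF inj] mM by (simp add: card_Diff_singleton)
  have cDm: "card (Dset S m) + 2 * genus S = m + 1"
    unfolding genus_def using card_Dset[OF c1 big mc] .
  have cH: "card H = (\<Sum>j<l. card {h. h \<notin> S \<and> h+j \<in> S \<and> (\<forall>y\<in>{1..<j}. h+y \<notin> S)})"
    unfolding H_def by (rule card_Hs[OF finG])
  have "int (card H) = (\<Sum>j<l. int (card {h. h \<notin> S \<and> h+j \<in> S \<and> (\<forall>y\<in>{1..<j}. h+y \<notin> S)}))"
    unfolding cH by simp
  also have "\<dots> = (\<Sum>j\<in>insert 0 {1..l-1}. int (card {h. h \<notin> S \<and> h+j \<in> S \<and> (\<forall>y\<in>{1..<j}. h+y \<notin> S)}))"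
  proof -
    have "{..<l} = insert 0 {1..l-1}" using assms(7) by auto
    then show ?thesis by simp
  qed
  also have "\<dots> = (\<Sum>j=1..l-1. int (card {h. h \<notin> S \<and> h+j \<in> S \<and> (\<forall>y\<in>{1..<j}. h+y \<notin> S)}))"
    by (subst sum.insert) auto
  also have "\<dots> = (\<Sum>j=1..l-1. \<lceil>real_of_int (int a - int j) / real b\<rceil>)"
  proof (rule sum.cong)
    fix j assume "j \<in> {1..l-1}"
    then have "1 \<le> j" "j < a + b" using lab assms(7) by auto
    then show "int (card {h. h \<notin> S \<and> h+j \<in> S \<and> (\<forall>y\<in>{1..<j}. h+y \<notin> S)}) =
      \<lceil>real_of_int (int a - int j) / real b\<rceil>"
      unfolding S_def by (rule card_K[OF ab])
  qed simp
  finally have cHs: "int (card H) = (\<Sum>j=1..l-1. \<lceil>real_of_int (int a - int j) / real b\<rceil>)" .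
  have "1 \<le> card M" using finM neM by (simp add: Suc_leI card_gt_0_iff)
  then show ?thesis using cD cDm cHs by simp
qed

end
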